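(* Let $L\subseteq\{a\}^*$ and let $b>0$ be an integer such that: for every $z\in L$ with $|z|\ge b$ there exist integers $p\ge 0$, $q$ with $|z|=p+q$, $0<q\le b$, and $a^{p+iq}\in L$ for all $i\ge 0$. Then for every $z\in L$ with $|z|\ge b$ there exist integers $k,p,q_0,\dots,q_k,i_0,\dots,i_k$ such that $z=a^{\,p+i_0q_0+\cdots+i_kq_k}$, where $0\le k<b$, $0\le p<b$, $0<q_j\le b$ for all $j\in\{0,\dots,k\}$, the numbers $q_0,\dots,q_k$ are pairwise distinct, and $i_j>0$ for all $j\in\{0,\dots,k\}$. In particular $z$ belongs to the language $L^{\langle p,q_0,\ldots,q_k\rangle}=\{a^{\,p+i_0q_0+\cdots+i_kq_k}\mid i_0>0,\dots,i_k>0\}$.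
   Context: $a^m$ denotes the word consisting of $m$ copies of the letter $a$; $|z|$ is the length of $z$. *)

theory Defs
  imports Main
begin

definition unary_lang :: "'a \<Rightarrow> nat \<Rightarrow> (nat \<Rightarrow> nat) \<Rightarrow> nat \<Rightarrow> 'a list set" where
  "unary_lang a p q k =
     {replicate (p + (\<Sum>j\<le>k. i j * q j)) a | i. \<forall>j\<le>k. i j > 0}"

end

theory Submission
  imports Defs
begin

lemma decomp:
  fixes b :: nat
  assumes pump: "\<forall>z\<in>L. length z \<ge> b \<longrightarrow>
       (\<exists>p q :: nat. length z = p + q \<and> 0 < q \<and> q \<le> b \<and>
          (\<forall>i::nat. replicate (p + i * q) a \<in> L))"
  shows "replicate n a \<in> L \<Longrightarrow> \<exists>p c. p < b \<and> n = p + (\<Sum>q\<in>{1..b}. c q * q)"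
proof (induction n rule: less_induct)
  case (less n)
  show ?case
  proof (cases "n < b")
    case True
    then show ?thesis by (rule_tac x=n in exI, rule_tac x="\<lambda>_. 0" in exI) simp
  next
    case False
    then obtain p q where pq: "n = p + q" "0 < q" "q \<le> b" "\<forall>i::nat. replicate (p + i * q) a \<in> L"
      using pump less.prems by fastforce
    from pq(4)[rule_format, of 0] have "replicate p a \<in> L" by simp
    with less.IH[of p] pq obtain p' c where pc: "p' < b" "p = p' + (\<Sum>q\<in>{1..b}. c q * q)" by auto
    define c' where "c' = c(q := Suc (c q))"
    have qin: "q \<in> {1..b}" using pq by auto
    have "(\<Sum>r\<in>{1..b}. c' r * r) = c' q * q + (\<Sum>r\<in>{1..b}-{q}. c' r * r)"
      by (rule sum.remove[OF _ qin]) simp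
    also have "(\<Sum>r\<in>{1..b}-{q}. c' r * r) = (\<Sum>r\<in>{1..b}-{q}. c r * r)"
      by (rule sum.cong) (auto simp: c'_def)
    also have "c' q * q = q + c q * q" by (simp add: c'_def)
    finally have "(\<Sum>r\<in>{1..b}. c' r * r) = q + (c q * q + (\<Sum>r\<in>{1..b}-{q}. c r * r))" by simp
    also have "c q * q + (\<Sum>r\<in>{1..b}-{q}. c r * r) = (\<Sum>r\<in>{1..b}. c r * r)"
      by (rule sum.remove[OF _ qin, symmetric]) simp
    finally show ?thesis using pc pq by (rule_tac x=p' in exI, rule_tac x=c' in exI) simp
  qed
qed

theorem mainTheorem3:
  fixes a :: 'a and L :: "'a list set" and b :: nat
  assumes unary: "\<forall>z\<in>L. set z \<subseteq> {a}"
    and bpos: "b > 0"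
    and pump: "\<forall>z\<in>L. length z \<ge> b \<longrightarrow>
       (\<exists>p q :: nat. length z = p + q \<and> 0 < q \<and> q \<le> b \<and>
          (\<forall>i::nat. replicate (p + i * q) a \<in> L))"
  shows "\<forall>z\<in>L. length z \<ge> b \<longrightarrow>
       (\<exists>(k::nat) (p::nat) (q::nat \<Rightarrow> nat) (i::nat \<Rightarrow> nat).
          z = replicate (p + (\<Sum>j\<le>k. i j * q j)) a \<and>
          k < b \<and> p < b \<and>
          (\<forall>j\<le>k. 0 < q j \<and> q j \<le> b) \<and>
          inj_on q {..k} \<and>
          (\<forall>j\<le>k. 0 < i j) \<and>
          z \<in> unary_lang a p q k)"
proof (intro ballI impI)
  fix z assume zL: "z \<in> L" and zb: "b \<le> length z"
  have zrep: "z = replicate (length z) a"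
    using unary zL by (metis replicate_length_same singletonD subsetD)
  then obtain p c where pc: "p < b" "length z = p + (\<Sum>q\<in>{1..b}. c q * q)"
    using decomp[OF pump, of "length z"] zL by metis
  define Q where "Q = {q\<in>{1..b}. c q > 0}"
  have finQ: "finite Q" by (simp add: Q_def)
  have sQ: "(\<Sum>q\<in>{1..b}. c q * q) = (\<Sum>q\<in>Q. c q * q)"
    unfolding Q_def by (rule sum.mono_neutral_right) auto
  define xs where "xs = sorted_list_of_set Q"
  have dxs: "distinct xs" and sxs: "set xs = Q" using finQ by (auto simp: xs_def)
  have Qne: "Q \<noteq> {}" using pc zb sQ by auto
  hence lpos: "length xs > 0" using sxs by auto
  define k where "k = length xs - 1"
  have kk: "{..k} = {..<length xs}" using lpos by (auto simp: k_def less_Suc_eq_le[symmetric])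
  have inj: "inj_on (nth xs) {..k}" using dxs kk by (simp add: inj_on_nth)
  have img: "nth xs ` {..k} = Q" using kk sxs by (auto simp: set_conv_nth)
  have ssum: "(\<Sum>j\<le>k. c (xs!j) * (xs!j)) = (\<Sum>q\<in>Q. c q * q)"
    using sum.reindex[OF inj, of "\<lambda>q. c q * q"] img by simp
  have "Q \<subseteq> {1..b}" by (auto simp: Q_def)
  hence cardQ: "card Q \<le> b" using card_mono[of "{1..b}" Q] by simp
  have kb: "k < b" proof -
    have "length xs \<le> b" using cardQ distinct_card[OF dxs] sxs by simp
    thus ?thesis using lpos unfolding k_def by linarith
  qed
  have qb: "\<forall>j\<le>k. 0 < xs!j \<and> xs!j \<le> b" "\<forall>j\<le>k. 0 < c (xs!j)"
    using img unfolding Q_def by fastforce+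
  have zeq: "z = replicate (p + (\<Sum>j\<le>k. c (xs!j) * (xs!j))) a"
    using pc ssum sQ by (subst zrep) simp
  show "\<exists>(k::nat) (p::nat) (q::nat \<Rightarrow> nat) (i::nat \<Rightarrow> nat).
          z = replicate (p + (\<Sum>j\<le>k. i j * q j)) a \<and>
          k < b \<and> p < b \<and>
          (\<forall>j\<le>k. 0 < q j \<and> q j \<le> b) \<and>
          inj_on q {..k} \<and>
          (\<forall>j\<le>k. 0 < i j) \<and>
          z \<in> unary_lang a p q k"
  proof (intro exI conjI)
    show "z = replicate (p + (\<Sum>j\<le>k. c (xs!j) * (xs!j))) a" by (rule zeq)
    show "k < b" by (rule kb)
    show "p < b" by (rule pc(1))
    show "\<forall>j\<le>k. 0 < xs!j \<and> xs!j \<le> b" by (rule qb(1))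
    show "inj_on (nth xs) {..k}" by (rule inj)
    show "\<forall>j\<le>k. 0 < c (xs!j)" by (rule qb(2))
    show "z \<in> unary_lang a p (nth xs) k"
      unfolding unary_lang_def
      by (rule CollectI, rule exI[of _ "\<lambda>j. c (xs!j)"], rule conjI[OF zeq qb(2)])
  qed
qed

end
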